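(* Let $\mathcal{X}$ be a finite nonempty set of types, $n=(n_x)_{x\in\mathcal{X}}$ nonnegative integers, and $\Phi=(\Phi_{xy})_{x,y\in\mathcal{X}}$ a real matrix with $\Phi_{xy}=\Phi_{yx}$ for all $x,y$. Then: (i) a stable roommate matching exists if and only if $\mathcal{W}_{\mathcal{P}}(n,\Phi)=\mathcal{W}_{\mathcal{B}}(n,n,\Phi/2)$; (ii) every stable roommate matching $\mu$ achieves the maximal aggregate surplus, i.e. $S_R(\mu;\Phi)=\mathcal{W}_{\mathcal{P}}(n,\Phi)$; (iii) whenever $(\mu,u)$ is a stable outcome, the payoff vector $u$ (together with some antisymmetric matrix $A$) is an optimal solution of the program $$\min_{u\in\mathbb{R}^{\mathcal{X}},\,A\in\mathbb{R}^{\mathcal{X}\times\mathcal{X}}}\ \sum_x u_x n_x\quad\text{s.t. } u_x\ge 0,\ \ u_x+u_y\ge \Phi_{xy}+A_{xy},\ \ A_{xy}=-A_{yx}\ \text{ for all } x,y\in\mathcal{X}.$$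
   Context: Roommate matching with transferable utility: $n_x$ is the number of individuals of type $x$; a pair of types $\{x,y\}$ (possibly $x=y$) generates joint surplus $\Phi_{xy}$; singles get utility $0$. Feasible roommate matchings: $\mathcal{P}(n)=\{\mu=(\mu_{xy})_{x,y\in\mathcal{X}}:\ \mu_{xy}\in\mathbb{N},\ \mu_{xy}=\mu_{yx},\ 2\mu_{xx}+\sum_{y\neq x}\mu_{xy}\le n_x\ \forall x\}$. Total surplus $S_R(\mu;\Phi)=\sum_x\mu_{xx}\Phi_{xx}+\sum_{x\neq y}\mu_{xy}\Phi_{xy}/2$, and $\mathcal{W}_{\mathcal{P}}(n,\Phi)=\max_{\mu\in\mathcal{P}(n)}S_R(\mu;\Phi)$. Bipartite problem: $\mathcal{B}(n,n)=\{\nu\in\mathbb{N}^{\mathcal{X}\times\mathcal{X}}:\ \sum_y\nu_{xy}\le n_x\ \forall x,\ \sum_x\nu_{xy}\le n_y\ \forall y\}$ and $\mathcal{W}_{\mathcal{B}}(n,n,\Phi/2)=\max_{\nu\in\mathcal{B}(n,n)}\sum_{x,y}\nu_{xy}\Phi_{xy}/2$. An outcome is a pair $(\mu,u)$ with $\mu\in\mathcal{P}(n)$ and $u=(u_x)\in\mathbb{R}^{\mathcal{X}}$ (payoff of each type-$x$ individual) such that $\sum_x n_xu_x=S_R(\mu;\Phi)$. It is stable if $u_x\ge0$ and $u_x+u_y\ge\Phi_{xy}$ for all $x,y\in\mathcal{X}$. A matching $\mu\in\mathcal{P}(n)$ is a stable roommate matching if there is $u$ with $(\mu,u)$ a stable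 outcome. *)

theory Defs
  imports Complex_Main
begin

definition roommate_matchings :: "('x::finite \<Rightarrow> nat) \<Rightarrow> ('x \<Rightarrow> 'x \<Rightarrow> nat) set" where
  "roommate_matchings n = {\<mu>. (\<forall>x y. \<mu> x y = \<mu> y x) \<and>
     (\<forall>x. 2 * \<mu> x x + (\<Sum>y\<in>UNIV - {x}. \<mu> x y) \<le> n x)}"

definition S_R :: "('x::finite \<Rightarrow> 'x \<Rightarrow> nat) \<Rightarrow> ('x \<Rightarrow> 'x \<Rightarrow> real) \<Rightarrow> real" where
  "S_R \<mu> \<Phi> = (\<Sum>x\<in>UNIV. real (\<mu> x x) * \<Phi> x x)
              + (\<Sum>(x,y)\<in>{(x,y). x \<noteq> y}. real (\<mu> x y) * \<Phi> x y / 2)"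

definition W_P :: "('x::finite \<Rightarrow> nat) \<Rightarrow> ('x \<Rightarrow> 'x \<Rightarrow> real) \<Rightarrow> real" where
  "W_P n \<Phi> = Max ((\<lambda>\<mu>. S_R \<mu> \<Phi>) ` roommate_matchings n)"

definition bipartite_matchings :: "('x::finite \<Rightarrow> nat) \<Rightarrow> ('x \<Rightarrow> nat) \<Rightarrow> ('x \<Rightarrow> 'x \<Rightarrow> nat) set" where
  "bipartite_matchings n m = {\<nu>. (\<forall>x. (\<Sum>y\<in>UNIV. \<nu> x y) \<le> n x) \<and>
     (\<forall>y. (\<Sum>x\<in>UNIV. \<nu> x y) \<le> m y)}"

definition W_B :: "('x::finite \<Rightarrow> nat) \<Rightarrow> ('x \<Rightarrow> nat) \<Rightarrow> ('x \<Rightarrow> 'x \<Rightarrow> real) \<Rightarrow> real" where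
  "W_B n m \<Psi> = Max ((\<lambda>\<nu>. \<Sum>(x,y)\<in>UNIV. real (\<nu> x y) * \<Psi> x y) ` bipartite_matchings n m)"

definition is_outcome :: "('x::finite \<Rightarrow> nat) \<Rightarrow> ('x \<Rightarrow> 'x \<Rightarrow> real) \<Rightarrow> ('x \<Rightarrow> 'x \<Rightarrow> nat) \<Rightarrow> ('x \<Rightarrow> real) \<Rightarrow> bool" where
  "is_outcome n \<Phi> \<mu> u \<longleftrightarrow> \<mu> \<in> roommate_matchings n \<and> (\<Sum>x\<in>UNIV. real (n x) * u x) = S_R \<mu> \<Phi>"

definition stable_outcome :: "('x::finite \<Rightarrow> nat) \<Rightarrow> ('x \<Rightarrow> 'x \<Rightarrow> real) \<Rightarrow> ('x \<Rightarrow> 'x \<Rightarrow> nat) \<Rightarrow> ('x \<Rightarrow> real) \<Rightarrow> bool" where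
  "stable_outcome n \<Phi> \<mu> u \<longleftrightarrow> is_outcome n \<Phi> \<mu> u \<and>
     (\<forall>x. u x \<ge> 0) \<and> (\<forall>x y. u x + u y \<ge> \<Phi> x y)"

definition stable_roommate_matching :: "('x::finite \<Rightarrow> nat) \<Rightarrow> ('x \<Rightarrow> 'x \<Rightarrow> real) \<Rightarrow> ('x \<Rightarrow> 'x \<Rightarrow> nat) \<Rightarrow> bool" where
  "stable_roommate_matching n \<Phi> \<mu> \<longleftrightarrow> \<mu> \<in> roommate_matchings n \<and> (\<exists>u. stable_outcome n \<Phi> \<mu> u)"

definition dual_feasible :: "('x::finite \<Rightarrow> 'x \<Rightarrow> real) \<Rightarrow> ('x \<Rightarrow> real) \<Rightarrow> ('x \<Rightarrow> 'x \<Rightarrow> real) \<Rightarrow> bool" where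
  "dual_feasible \<Phi> u A \<longleftrightarrow> (\<forall>x. u x \<ge> 0) \<and> (\<forall>x y. u x + u y \<ge> \<Phi> x y + A x y)
     \<and> (\<forall>x y. A x y = - A y x)"

definition dual_optimal :: "('x::finite \<Rightarrow> nat) \<Rightarrow> ('x \<Rightarrow> 'x \<Rightarrow> real) \<Rightarrow> ('x \<Rightarrow> real) \<Rightarrow> ('x \<Rightarrow> 'x \<Rightarrow> real) \<Rightarrow> bool" where
  "dual_optimal n \<Phi> u A \<longleftrightarrow> dual_feasible \<Phi> u A \<and>
     (\<forall>u' A'. dual_feasible \<Phi> u' A' \<longrightarrow> (\<Sum>x\<in>UNIV. u x * real (n x)) \<le> (\<Sum>x\<in>UNIV. u' x * real (n x)))"

end

theory Submission
  imports Defs "HOL-Library.FuncSet"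
begin

fun wlk :: "('v \<Rightarrow> 'v \<Rightarrow> bool) \<Rightarrow> 'v list \<Rightarrow> bool" where
  "wlk E (v # w # vs) = (E v w \<and> wlk E (w # vs))"
| "wlk E vs = True"

fun cst :: "('v \<Rightarrow> 'v \<Rightarrow> real) \<Rightarrow> 'v list \<Rightarrow> real" where
  "cst c (v # w # vs) = c v w + cst c (w # vs)"
| "cst c vs = 0"

lemma wlk_app: "wlk E (xs @ v # ys) = (wlk E (xs @ [v]) \<and> wlk E (v # ys))"
  by (induction xs rule: induct_list012) auto

lemma cst_app: "cst c (xs @ v # ys) = cst c (xs @ [v]) + cst c (v # ys)"
  by (induction xs rule: induct_list012) auto

lemma cst_zip: "cst c ws = (\<Sum>(a,b)\<leftarrow>zip ws (tl ws). c a b)"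
  by (induction c ws rule: cst.induct) auto

lemma wlk_zip: "wlk E ws = (\<forall>(a,b)\<in>set (zip ws (tl ws)). E a b)"
  by (induction E ws rule: wlk.induct) auto

lemma split3:
  assumes "wlk E (xs @ [y] @ ys @ [y] @ zs)"
  shows "wlk E (xs @ [y])" "wlk E (y # ys @ [y])" "wlk E (y # zs)"
    "wlk E (xs @ y # zs)"
proof -
  have a: "wlk E (xs @ [y]) \<and> wlk E (y # ys @ y # zs)"
    using assms wlk_app[of E xs y "ys @ y # zs"] by simp
  have b: "wlk E (y # ys @ [y]) \<and> wlk E (y # zs)"
    using a wlk_app[of E "y # ys" y zs] by simp
  show "wlk E (xs @ [y])" "wlk E (y # ys @ [y])" "wlk E (y # zs)" using a b by auto
  show "wlk E (xs @ y # zs)" using a b wlk_app[of E xs y zs] by simp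
qed

lemma split3c: "cst c (xs @ [y] @ ys @ [y] @ zs) = cst c (xs @ y # zs) + cst c (y # ys @ [y])"
proof -
  have "cst c (xs @ [y] @ ys @ [y] @ zs) = cst c (xs @ [y]) + cst c (y # ys @ y # zs)"
    using cst_app[of c xs y "ys @ y # zs"] by simp
  also have "cst c (y # ys @ y # zs) = cst c (y # ys @ [y]) + cst c (y # zs)"
    using cst_app[of c "y # ys" y zs] by simp
  finally show "cst c (xs @ [y] @ ys @ [y] @ zs) = cst c (xs @ y # zs) + cst c (y # ys @ [y])"
    using cst_app[of c xs y zs] by simp
qed

lemma shorten:
  fixes E :: "'v::finite \<Rightarrow> 'v \<Rightarrow> bool"
  assumes cyc: "\<And>ws. wlk E ws \<Longrightarrow> ws \<noteq> [] \<Longrightarrow> hd ws = last ws \<Longrightarrow> 0 \<le> cst c ws"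
  shows "wlk E vs \<Longrightarrow> vs \<noteq> [] \<Longrightarrow> \<exists>ws. wlk E ws \<and> ws \<noteq> [] \<and> last ws = last vs
           \<and> length ws \<le> card (UNIV::'v set) \<and> cst c ws \<le> cst c vs"
proof (induction vs rule: length_induct)
  case (1 vs)
  show ?case
  proof (cases "length vs \<le> card (UNIV::'v set)")
    case True thus ?thesis using 1 by blast
  next
    case False
    have "\<not> distinct vs"
    proof
      assume "distinct vs"
      then have "length vs = card (set vs)" by (simp add: distinct_card)
      also have "\<dots> \<le> card (UNIV::'v set)" by (rule card_mono) auto
      finally show False using False by simp
    qed
    then obtain xs y ys zs where vs: "vs = xs @ [y] @ ys @ [y] @ zs"
      using not_distinct_decomp by blast
    note s = split3[OF 1(2)[unfolded vs]] split3c[of c xs y ys zs]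
    have c0: "0 \<le> cst c (y # ys @ [y])" using cyc[OF s(2)] by simp
    have "length (xs @ y # zs) < length vs" using vs by simp
    then obtain ws where ws: "wlk E ws" "ws \<noteq> []" "last ws = last (xs @ y # zs)"
       "length ws \<le> card (UNIV::'v set)" "cst c ws \<le> cst c (xs @ y # zs)"
      using 1(1) s(4) by blast
    have "last (xs @ y # zs) = last vs" using vs by (cases zs) auto
    moreover have "cst c (xs @ y # zs) \<le> cst c vs" using s(5) c0 vs by simp
    ultimately show ?thesis using ws by force
  qed
qed

lemma potential:
  fixes E :: "'v::finite \<Rightarrow> 'v \<Rightarrow> bool"
  assumes cyc: "\<And>ws. wlk E ws \<Longrightarrow> ws \<noteq> [] \<Longrightarrow> hd ws = last ws \<Longrightarrow> 0 \<le> cst c ws"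
  shows "\<exists>d. \<forall>v w. E v w \<longrightarrow> d w \<le> d v + c v w"
proof -
  define S where "S v = {ws. wlk E ws \<and> ws \<noteq> [] \<and> last ws = v \<and> length ws \<le> card (UNIV::'v set)}" for v
  define d where "d v = Min (cst c ` S v)" for v
  have fin: "finite (S v)" for v
  proof -
    have "S v \<subseteq> {ws. set ws \<subseteq> UNIV \<and> length ws \<le> card (UNIV::'v set)}" by (auto simp: S_def)
    thus ?thesis using finite_lists_length_le[OF finite_UNIV] by (rule finite_subset)
  qed
  have ne: "[v] \<in> S v" for v
    using finite_UNIV_card_ge_0[where 'a='v] by (auto simp: S_def)
  have dle: "ws \<in> S v \<Longrightarrow> d v \<le> cst c ws" for ws v
    unfolding d_def using fin by auto
  show ?thesis
  proof (intro exI allI impI)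
    fix v w assume e: "E v w"
    obtain ws where ws: "ws \<in> S v" "cst c ws = d v"
      using Min_in[of "cst c ` S v"] fin ne unfolding d_def by fastforce
    have wsd: "ws = butlast ws @ [v]" using ws by (auto simp: S_def)
    have "wlk E (butlast ws @ [v])" using ws wsd by (auto simp: S_def)
    then have w2: "wlk E (butlast ws @ v # [w])" using wlk_app[of E "butlast ws" v "[w]"] e by simp
    have c2: "cst c (butlast ws @ v # [w]) = cst c ws + c v w"
      using cst_app[of c "butlast ws" v "[w]"] wsd by simp
    obtain ws' where o: "wlk E ws'" "ws' \<noteq> []" "last ws' = w" "length ws' \<le> card (UNIV::'v set)"
       "cst c ws' \<le> cst c (butlast ws @ v # [w])"
      using shorten[OF cyc w2] by fastforce
    then have "d w \<le> cst c ws'" by (intro dle) (auto simp: S_def)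
    then show "d w \<le> d v + c v w" using c2 ws o(5) by simp
  qed
qed

lemma simple_neg:
  "wlk E vs \<Longrightarrow> vs \<noteq> [] \<Longrightarrow> hd vs = last vs \<Longrightarrow> cst c vs < 0 \<Longrightarrow>
   \<exists>ws. wlk E ws \<and> ws \<noteq> [] \<and> hd ws = last ws \<and> cst c ws < 0 \<and> distinct (tl ws)"
proof (induction vs rule: length_induct)
  case (1 vs)
  then obtain v0 t where vs: "vs = v0 # t" by (cases vs) auto
  show ?case
  proof (cases "distinct t")
    case True thus ?thesis using 1 vs by force
  next
    case False
    then obtain xs y ys zs where t: "t = xs @ [y] @ ys @ [y] @ zs"
      using not_distinct_decomp by blast
    have vs': "vs = (v0 # xs) @ [y] @ ys @ [y] @ zs" using vs t by simp
    note s = split3[OF 1(2)[unfolded vs']] split3c[of c "v0 # xs" y ys zs]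
    show ?thesis
    proof (cases "cst c (y # ys @ [y]) < 0")
      case True
      have "length (y # ys @ [y]) < length vs" using vs' by simp
      then show ?thesis using 1(1) s(2) True by (metis hd_Cons_tl last_snoc list.sel(1) list.simps(3) append_Cons)
    next
      case False
      have neg: "cst c ((v0 # xs) @ y # zs) < 0" using s(5) False 1(5) vs' by simp
      have "length ((v0 # xs) @ y # zs) < length vs" using vs' by simp
      moreover have "hd ((v0 # xs) @ y # zs) = last ((v0 # xs) @ y # zs)"
        using 1(4) vs' by (cases zs) auto
      ultimately show ?thesis using 1(1) s(4) neg by blast
    qed
  qed
qed


datatype 'x nd = Src | Lf 'x | Rt 'x

instance nd :: (finite) finite
proof
  have "(UNIV :: 'a nd set) = insert Src (range Lf \<union> range Rt)"
  proof (rule set_eqI)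
    fix x :: "'a nd"
    show "x \<in> UNIV \<longleftrightarrow> x \<in> insert Src (range Lf \<union> range Rt)" by (cases x) auto
  qed
  moreover have "finite (insert Src (range Lf \<union> range (Rt :: 'a \<Rightarrow> 'a nd)))"
    by (intro finite.insertI finite_UnI finite_imageI finite_UNIV)
  ultimately show "finite (UNIV :: 'a nd set)" by simp
qed

definition row :: "('x::finite \<Rightarrow> 'x \<Rightarrow> nat) \<Rightarrow> 'x \<Rightarrow> nat" where
  "row \<nu> x = (\<Sum>y\<in>UNIV. \<nu> x y)"
definition col :: "('x::finite \<Rightarrow> 'x \<Rightarrow> nat) \<Rightarrow> 'x \<Rightarrow> nat" where
  "col \<nu> y = (\<Sum>x\<in>UNIV. \<nu> x y)"

definition BM :: "('x::finite \<Rightarrow> nat) \<Rightarrow> ('x \<Rightarrow> 'x \<Rightarrow> nat) set" where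
  "BM n = {\<nu>. (\<forall>x. row \<nu> x \<le> n x) \<and> (\<forall>y. col \<nu> y \<le> n y)}"

definition bval :: "('x::finite \<Rightarrow> 'x \<Rightarrow> real) \<Rightarrow> ('x \<Rightarrow> 'x \<Rightarrow> nat) \<Rightarrow> real" where
  "bval \<Psi> \<nu> = (\<Sum>x\<in>UNIV. \<Sum>y\<in>UNIV. real (\<nu> x y) * \<Psi> x y)"

fun resE :: "('x::finite \<Rightarrow> nat) \<Rightarrow> ('x \<Rightarrow> 'x \<Rightarrow> nat) \<Rightarrow> 'x nd \<Rightarrow> 'x nd \<Rightarrow> bool" where
  "resE n \<nu> Src (Lf x) = (row \<nu> x < n x)"
| "resE n \<nu> Src (Rt y) = True"
| "resE n \<nu> (Lf x) Src = True"
| "resE n \<nu> (Rt y) Src = (col \<nu> y < n y)"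
| "resE n \<nu> (Lf x) (Rt y) = True"
| "resE n \<nu> (Rt y) (Lf x) = (0 < \<nu> x y)"
| "resE n \<nu> _ _ = False"

fun resC :: "('x \<Rightarrow> 'x \<Rightarrow> real) \<Rightarrow> 'x nd \<Rightarrow> 'x nd \<Rightarrow> real" where
  "resC \<Psi> (Lf x) (Rt y) = - \<Psi> x y"
| "resC \<Psi> (Rt y) (Lf x) = \<Psi> x y"
| "resC \<Psi> _ _ = 0"

lemma resC_expand:
  fixes \<Psi> :: "'x::finite \<Rightarrow> 'x \<Rightarrow> real"
  shows "resC \<Psi> a b = (\<Sum>x\<in>UNIV. \<Sum>y\<in>UNIV.
     (if (a,b) = (Rt y, Lf x) then \<Psi> x y else 0) - (if (a,b) = (Lf x, Rt y) then \<Psi> x y else 0))"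
proof -
  have d: "(\<Sum>x\<in>UNIV. \<Sum>y\<in>UNIV. if x = p \<and> y = q then \<Psi> x y else 0) = \<Psi> p q" for p q
  proof -
    have "(\<Sum>x\<in>UNIV. \<Sum>y\<in>UNIV. if x = p \<and> y = q then \<Psi> x y else 0)
       = (\<Sum>x\<in>UNIV. if x = p then (\<Sum>y\<in>UNIV. if y = q then \<Psi> x y else 0) else 0)"
      by (rule sum.cong) auto
    also have "\<dots> = \<Psi> p q" by simp
    finally show ?thesis .
  qed
  show ?thesis
  proof (cases a; cases b)
    fix p q assume "a = Lf p" "b = Rt q"
    then show ?thesis using d[of p q] by (simp add: sum_subtractf sum_negf conj_commute eq_commute[of p] eq_commute[of q])
  next
    fix p q assume "a = Rt q" "b = Lf p"
    then show ?thesis using d[of p q] by (simp add: sum_subtractf sum_negf conj_commute eq_commute[of p] eq_commute[of q])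
  qed auto
qed

lemma augment:
  fixes Q :: "('x::finite nd \<times> 'x nd) set" and \<Psi> :: "'x \<Rightarrow> 'x \<Rightarrow> real"
  assumes nu: "\<nu> \<in> BM n"
    and QE: "\<forall>(a,b)\<in>Q. resE n \<nu> a b"
    and ufst: "inj_on fst Q"
    and usnd: "inj_on snd Q"
    and fs: "fst ` Q = snd ` Q"
    and neg: "(\<Sum>(a,b)\<in>Q. resC \<Psi> a b) < 0"
  shows "\<exists>\<nu>'\<in>BM n. bval \<Psi> \<nu> < bval \<Psi> \<nu>'"
proof -
  define iLR where "iLR x y = (if (Lf x, Rt y) \<in> Q then 1 else 0 :: nat)" for x y
  define iRL where "iRL x y = (if (Rt y, Lf x) \<in> Q then 1 else 0 :: nat)" for x y
  define \<nu>' where "\<nu>' x y = \<nu> x y + iLR x y - iRL x y" for x y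
  have RLpos: "iRL x y = 1 \<Longrightarrow> 0 < \<nu> x y" for x y
    using QE unfolding iRL_def by (auto split: if_splits)
  have nr: "real (\<nu>' x y) = real (\<nu> x y) + real (iLR x y) - real (iRL x y)" for x y
  proof (cases "iRL x y = 1")
    case True thus ?thesis using RLpos[of x y] by (simp add: \<nu>'_def of_nat_diff)
  next
    case False then have "iRL x y = 0" by (simp add: iRL_def split: if_splits)
    thus ?thesis by (simp add: \<nu>'_def)
  qed
  have iLR01: "real (iLR x y) \<ge> 0" "real (iRL x y) \<ge> 0" for x y by auto
  have rowb: "row \<nu>' x \<le> n x" for x
  proof -
    have r: "real (row \<nu>' x) = real (row \<nu> x) + (\<Sum>y\<in>UNIV. real (iLR x y)) - (\<Sum>y\<in>UNIV. real (iRL x y))"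
      by (simp add: row_def nr sum.distrib sum_subtractf)
    have rn: "row \<nu> x \<le> n x" using nu by (auto simp: BM_def)
    have "real (row \<nu>' x) \<le> real (n x)"
    proof (cases "\<exists>y0. (Lf x, Rt y0) \<in> Q")
      case False
      then have "(\<Sum>y\<in>UNIV. real (iLR x y)) = 0" by (simp add: iLR_def)
      moreover have "(\<Sum>y\<in>UNIV. real (iRL x y)) \<ge> 0" by (rule sum_nonneg) auto
      ultimately show ?thesis using r rn by simp
    next
      case True
      then obtain y0 where y0: "(Lf x, Rt y0) \<in> Q" by blast
      have "real (iLR x y) = (if y = y0 then 1 else 0)" for y
        using ufst y0 unfolding iLR_def inj_on_def by force
      then have s1: "(\<Sum>y\<in>UNIV. real (iLR x y)) = 1" by simp
      have "Lf x \<in> snd ` Q" using fs y0 by force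
      then obtain p where p: "(p, Lf x) \<in> Q" by force
      show ?thesis
      proof (cases p)
        case Src
        then have "row \<nu> x < n x" using QE p by auto
        moreover have "(\<Sum>y\<in>UNIV. real (iRL x y)) \<ge> 0" by (rule sum_nonneg) auto
        ultimately show ?thesis using r s1 by simp
      next
        case (Rt y1)
        then have "iRL x y1 = 1" using p by (simp add: iRL_def)
        then have "(\<Sum>y\<in>UNIV. real (iRL x y)) \<ge> 1"
          using member_le_sum[of y1 UNIV "\<lambda>y. real (iRL x y)"] by simp
        then show ?thesis using r s1 rn by simp
      next
        case (Lf x1) then show ?thesis using QE p by auto
      qed
    qed
    thus ?thesis by simp
  qed
  have colb: "col \<nu>' y \<le> n y" for y
  proof -
    have r: "real (col \<nu>' y) = real (col \<nu> y) + (\<Sum>x\<in>UNIV. real (iLR x y)) - (\<Sum>x\<in>UNIV. real (iRL x y))"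
      by (simp add: col_def nr sum.distrib sum_subtractf)
    have rn: "col \<nu> y \<le> n y" using nu by (auto simp: BM_def)
    have "real (col \<nu>' y) \<le> real (n y)"
    proof (cases "\<exists>x0. (Lf x0, Rt y) \<in> Q")
      case False
      then have "(\<Sum>x\<in>UNIV. real (iLR x y)) = 0" by (simp add: iLR_def)
      moreover have "(\<Sum>x\<in>UNIV. real (iRL x y)) \<ge> 0" by (rule sum_nonneg) auto
      ultimately show ?thesis using r rn by simp
    next
      case True
      then obtain x0 where x0: "(Lf x0, Rt y) \<in> Q" by blast
      have "real (iLR x y) = (if x = x0 then 1 else 0)" for x
        using usnd x0 unfolding iLR_def inj_on_def by force
      then have s1: "(\<Sum>x\<in>UNIV. real (iLR x y)) = 1" by simp
      have "Rt y \<in> fst ` Q" using fs x0 by force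
      then obtain p where p: "(Rt y, p) \<in> Q" by force
      show ?thesis
      proof (cases p)
        case Src
        then have "col \<nu> y < n y" using QE p by auto
        moreover have "(\<Sum>x\<in>UNIV. real (iRL x y)) \<ge> 0" by (rule sum_nonneg) auto
        ultimately show ?thesis using r s1 by simp
      next
        case (Lf x1)
        then have "iRL x1 y = 1" using p by (simp add: iRL_def)
        then have "(\<Sum>x\<in>UNIV. real (iRL x y)) \<ge> 1"
          using member_le_sum[of x1 UNIV "\<lambda>x. real (iRL x y)"] by simp
        then show ?thesis using r s1 rn by simp
      next
        case (Rt y1) then show ?thesis using QE p by auto
      qed
    qed
    thus ?thesis by simp
  qed
  have inBM: "\<nu>' \<in> BM n" using rowb colb by (auto simp: BM_def)
  have Qsum: "(\<Sum>(a,b)\<in>Q. resC \<Psi> a b) =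
      (\<Sum>x\<in>UNIV. \<Sum>y\<in>UNIV. (real (iRL x y) - real (iLR x y)) * \<Psi> x y)"
  proof -
    have "(\<Sum>(a,b)\<in>Q. resC \<Psi> a b) = (\<Sum>q\<in>Q. \<Sum>x\<in>UNIV. \<Sum>y\<in>UNIV.
       (if q = (Rt y, Lf x) then \<Psi> x y else 0) - (if q = (Lf x, Rt y) then \<Psi> x y else 0))"
      by (rule sum.cong) (auto simp: resC_expand)
    also have "\<dots> = (\<Sum>x\<in>UNIV. \<Sum>y\<in>UNIV. \<Sum>q\<in>Q.
       (if q = (Rt y, Lf x) then \<Psi> x y else 0) - (if q = (Lf x, Rt y) then \<Psi> x y else 0))"
      by (subst sum.swap) (subst sum.swap, rule refl)
    also have "\<dots> = (\<Sum>x\<in>UNIV. \<Sum>y\<in>UNIV. (real (iRL x y) - real (iLR x y)) * \<Psi> x y)"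
      by (rule sum.cong, simp, rule sum.cong, simp)
         (simp add: sum_subtractf iRL_def iLR_def left_diff_distrib)
    finally show ?thesis .
  qed
  have "bval \<Psi> \<nu>' = bval \<Psi> \<nu> - (\<Sum>(a,b)\<in>Q. resC \<Psi> a b)"
    unfolding Qsum bval_def nr
    by (simp add: algebra_simps sum.distrib sum_subtractf)
  then have "bval \<Psi> \<nu> < bval \<Psi> \<nu>'" using neg by linarith
  then show ?thesis using inBM by blast
qed


lemma duality:
  fixes \<nu> :: "'x::finite \<Rightarrow> 'x \<Rightarrow> nat" and \<Psi> :: "'x \<Rightarrow> 'x \<Rightarrow> real"
  assumes nu: "\<nu> \<in> BM n" and opt: "\<forall>\<nu>'\<in>BM n. bval \<Psi> \<nu>' \<le> bval \<Psi> \<nu>"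
  shows "\<exists>u v. (\<forall>x. 0 \<le> u x) \<and> (\<forall>y. 0 \<le> v y) \<and> (\<forall>x y. \<Psi> x y \<le> u x + v y) \<and>
     (\<Sum>x\<in>UNIV. real (n x) * u x) + (\<Sum>y\<in>UNIV. real (n y) * v y) = bval \<Psi> \<nu>"
proof -
  let ?E = "resE n \<nu>" and ?c = "resC \<Psi>"
  have cyc: "0 \<le> cst ?c ws" if w: "wlk ?E ws" "ws \<noteq> []" "hd ws = last ws" for ws
  proof (rule ccontr)
    assume "\<not> 0 \<le> cst ?c ws"
    then have "cst ?c ws < 0" by simp
    then obtain vs where vs: "wlk ?E vs" "vs \<noteq> []" "hd vs = last vs" "cst ?c vs < 0" "distinct (tl vs)"
      using simple_neg[OF w] by blast
    obtain v0 t where vt: "vs = v0 # t" using vs by (cases vs) auto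
    have tne: "t \<noteq> []" using vs vt by auto
    have lt: "last t = v0" using vs vt tne by simp
    define L where "L = zip vs (tl vs)"
    have fstL: "map fst L = butlast vs" using vt
      by (simp add: L_def map_fst_zip_take butlast_conv_take)
    have sndL: "map snd L = tl vs" by (simp add: L_def map_snd_zip_take)
    have tdec: "t = butlast t @ [v0]" using tne lt append_butlast_last_id[of t] by simp
    have dt: "distinct t" using vs vt by simp
    then have "distinct (butlast t @ [v0])" by (simp only: tdec[symmetric])
    then have dbt: "distinct (butlast vs)" using vt tne by simp
    have "distinct (map fst L)" using dbt fstL by simp
    then have ufst: "inj_on fst (set L)" by (simp add: distinct_map)
    have "distinct (map snd L)" using vs(5) sndL by simp
    then have usnd: "inj_on snd (set L)" by (simp add: distinct_map)
    have "set (map fst L) = set (butlast vs)" using fstL by simp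
    then have "fst ` set L = set (butlast vs)" by simp
    also have "\<dots> = insert v0 (set (butlast t))" using vt tne by simp
    also have "\<dots> = set (butlast t @ [v0])" by simp
    also have "\<dots> = set t" by (simp only: tdec[symmetric])
    also have "set t = set (map snd L)" using sndL vt by simp
    also have "\<dots> = snd ` set L" by simp
    finally have fs: "fst ` set L = snd ` set L" .
    have QE: "\<forall>(a,b)\<in>set L. ?E a b" using vs(1) wlk_zip[of ?E vs] by (simp add: L_def)
    have dL: "distinct L" unfolding L_def by (rule distinct_zipI2) (rule vs(5))
    have "(\<Sum>(a,b)\<in>set L. ?c a b) = cst ?c vs"
      using cst_zip[of ?c vs] sum_list_distinct_conv_sum_set[OF dL, of "\<lambda>(a,b). ?c a b"]
      by (simp add: L_def)
    then have "(\<Sum>(a,b)\<in>set L. ?c a b) < 0" using vs by simp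
    then obtain \<nu>'' where "\<nu>'' \<in> BM n" "bval \<Psi> \<nu> < bval \<Psi> \<nu>''"
      using augment[OF nu QE ufst usnd fs] by blast
    then show False using opt by force
  qed
  obtain d where d: "\<forall>v w. ?E v w \<longrightarrow> d w \<le> d v + ?c v w" using potential[OF cyc] by blast
  define u where "u x = d (Lf x) - d Src" for x
  define v where "v y = d Src - d (Rt y)" for y
  have u0: "0 \<le> u x" for x using d[rule_format, of "Lf x" Src] by (simp add: u_def)
  have v0: "0 \<le> v y" for y using d[rule_format, of Src "Rt y"] by (simp add: v_def)
  have uv: "\<Psi> x y \<le> u x + v y" for x y using d[rule_format, of "Lf x" "Rt y"] by (simp add: u_def v_def)
  have cu: "row \<nu> x < n x \<Longrightarrow> u x = 0" for x
    using d[rule_format, of Src "Lf x"] u0[of x] by (simp add: u_def)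
  have cv: "col \<nu> y < n y \<Longrightarrow> v y = 0" for y
    using d[rule_format, of "Rt y" Src] v0[of y] by (simp add: v_def)
  have ce: "0 < \<nu> x y \<Longrightarrow> u x + v y = \<Psi> x y" for x y
    using d[rule_format, of "Rt y" "Lf x"] uv[of x y] by (simp add: u_def v_def)
  have s1: "(\<Sum>x\<in>UNIV. real (n x) * u x) = (\<Sum>x\<in>UNIV. \<Sum>y\<in>UNIV. real (\<nu> x y) * u x)"
  proof (rule sum.cong)
    fix x
    have "real (n x) * u x = real (row \<nu> x) * u x"
      using cu[of x] nu by (cases "row \<nu> x < n x") (auto simp: BM_def intro: antisym)
    also have "\<dots> = (\<Sum>y\<in>UNIV. real (\<nu> x y) * u x)" by (simp add: row_def sum_distrib_right)
    finally show "real (n x) * u x = (\<Sum>y\<in>UNIV. real (\<nu> x y) * u x)" .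
  qed simp
  have s2: "(\<Sum>y\<in>UNIV. real (n y) * v y) = (\<Sum>x\<in>UNIV. \<Sum>y\<in>UNIV. real (\<nu> x y) * v y)"
  proof -
    have "(\<Sum>y\<in>UNIV. real (n y) * v y) = (\<Sum>y\<in>UNIV. \<Sum>x\<in>UNIV. real (\<nu> x y) * v y)"
    proof (rule sum.cong)
      fix y
      have "real (n y) * v y = real (col \<nu> y) * v y"
        using cv[of y] nu by (cases "col \<nu> y < n y") (auto simp: BM_def intro: antisym)
      also have "\<dots> = (\<Sum>x\<in>UNIV. real (\<nu> x y) * v y)" by (simp add: col_def sum_distrib_right)
      finally show "real (n y) * v y = (\<Sum>x\<in>UNIV. real (\<nu> x y) * v y)" .
    qed simp
    also have "\<dots> = (\<Sum>x\<in>UNIV. \<Sum>y\<in>UNIV. real (\<nu> x y) * v y)" by (rule sum.swap)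
    finally show ?thesis .
  qed
  have s3: "(\<Sum>x\<in>UNIV. \<Sum>y\<in>UNIV. real (\<nu> x y) * u x) + (\<Sum>x\<in>UNIV. \<Sum>y\<in>UNIV. real (\<nu> x y) * v y)
      = bval \<Psi> \<nu>"
  proof -
    have "real (\<nu> x y) * u x + real (\<nu> x y) * v y = real (\<nu> x y) * \<Psi> x y" for x y
    proof (cases "\<nu> x y = 0")
      case False then show ?thesis using ce[of x y] by (simp add: distrib_left[symmetric])
    qed simp
    then show ?thesis by (simp add: bval_def sum.distrib[symmetric])
  qed
  show ?thesis
    apply (rule exI[of _ u], rule exI[of _ v])
    using u0 v0 uv s1 s2 s3 by simp
qed


lemma BM_eq: "bipartite_matchings n n = BM n"
  by (simp add: bipartite_matchings_def BM_def row_def col_def)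

lemma bval_eq: "(\<lambda>\<nu>. \<Sum>(x,y)\<in>UNIV. real (\<nu> x y) * \<Psi> x y) = bval \<Psi>"
  by (rule ext) (simp add: bval_def sum.cartesian_product)

lemma WB_eq: "W_B n n \<Psi> = Max (bval \<Psi> ` BM n)"
  unfolding W_B_def BM_eq bval_eq ..

lemma finite_bounded:
  "finite {f :: 'x::finite \<Rightarrow> 'x \<Rightarrow> nat. \<forall>x y. f x y \<le> n x}"
proof -
  have "{f :: 'x \<Rightarrow> 'x \<Rightarrow> nat. \<forall>x y. f x y \<le> n x} = Pi\<^sub>E UNIV (\<lambda>x. Pi\<^sub>E UNIV (\<lambda>y. {..n x}))"
    by (auto simp: PiE_UNIV_domain Pi_def)
  moreover have "finite (Pi\<^sub>E UNIV (\<lambda>x. Pi\<^sub>E UNIV (\<lambda>y. {..n x})) :: ('x \<Rightarrow> 'x \<Rightarrow> nat) set)"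
    by (intro finite_PiE) auto
  ultimately show ?thesis by simp
qed

lemma finite_BM: "finite (BM (n :: 'x::finite \<Rightarrow> nat))"
proof (rule finite_subset[OF _ finite_bounded[of n]])
  show "BM n \<subseteq> {f. \<forall>x y. f x y \<le> n x}"
  proof safe
    fix \<nu> x y assume "\<nu> \<in> BM n"
    then have "row \<nu> x \<le> n x" by (simp add: BM_def)
    moreover have "\<nu> x y \<le> row \<nu> x" unfolding row_def by (rule member_le_sum) auto
    ultimately show "\<nu> x y \<le> n x" by simp
  qed
qed

lemma finite_RM: "finite (roommate_matchings (n :: 'x::finite \<Rightarrow> nat))"
proof (rule finite_subset[OF _ finite_bounded[of n]])
  show "roommate_matchings n \<subseteq> {f. \<forall>x y. f x y \<le> n x}"
  proof safe
    fix \<mu> x y assume "\<mu> \<in> roommate_matchings n"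
    then have r: "2 * \<mu> x x + (\<Sum>y\<in>UNIV - {x}. \<mu> x y) \<le> n x" unfolding roommate_matchings_def by blast
    show "\<mu> x y \<le> n x"
    proof (cases "y = x")
      case True thus ?thesis using r by simp
    next
      case False
      then have "\<mu> x y \<le> (\<Sum>y\<in>UNIV - {x}. \<mu> x y)" by (intro member_le_sum) auto
      thus ?thesis using r by simp
    qed
  qed
qed

definition dbl :: "('x \<Rightarrow> 'x \<Rightarrow> nat) \<Rightarrow> 'x \<Rightarrow> 'x \<Rightarrow> nat" where
  "dbl \<mu> x y = (if x = y then 2 * \<mu> x x else \<mu> x y)"

lemma row_dbl: "row (dbl \<mu>) (x::'x::finite) = 2 * \<mu> x x + (\<Sum>y\<in>UNIV - {x}. \<mu> x y)"
proof -
  have "row (dbl \<mu>) x = dbl \<mu> x x + (\<Sum>y\<in>UNIV - {x}. dbl \<mu> x y)"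
    unfolding row_def by (rule sum.remove) auto
  moreover have "(\<Sum>y\<in>UNIV - {x}. dbl \<mu> x y) = (\<Sum>y\<in>UNIV - {x}. \<mu> x y)"
    by (rule sum.cong) (auto simp: dbl_def)
  moreover have "dbl \<mu> x x = 2 * \<mu> x x" by (simp add: dbl_def)
  ultimately show ?thesis by simp
qed

lemma dbl_BM:
  assumes "\<mu> \<in> roommate_matchings n"
  shows "dbl \<mu> \<in> BM n"
proof -
  have sym: "\<mu> x y = \<mu> y x" for x y using assms unfolding roommate_matchings_def by blast
  have r: "row (dbl \<mu>) x \<le> n x" for x
    using assms unfolding roommate_matchings_def row_dbl by blast
  have "col (dbl \<mu>) y = row (dbl \<mu>) y" for y
    unfolding col_def row_def by (rule sum.cong) (auto simp: dbl_def sym)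
  then show ?thesis using r by (simp add: BM_def)
qed

lemma S_R_dbl:
  fixes \<mu> :: "'x::finite \<Rightarrow> 'x \<Rightarrow> nat"
  shows "S_R \<mu> \<Phi> = bval (\<lambda>x y. \<Phi> x y / 2) (dbl \<mu>)"
proof -
  have p: "real (dbl \<mu> x y) * (\<Phi> x y / 2) = (if y = x then real (\<mu> x x) * \<Phi> x x else 0)
       + (if x \<noteq> y then real (\<mu> x y) * \<Phi> x y / 2 else 0)" for x y
    by (auto simp: dbl_def)
  have "bval (\<lambda>x y. \<Phi> x y / 2) (dbl \<mu>) = (\<Sum>x\<in>UNIV. real (\<mu> x x) * \<Phi> x x)
      + (\<Sum>x\<in>UNIV. \<Sum>y\<in>UNIV. if x \<noteq> y then real (\<mu> x y) * \<Phi> x y / 2 else 0)"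
    unfolding bval_def p by (simp add: sum.distrib)
  moreover have "(\<Sum>(x,y)\<in>{(x,y). x \<noteq> y}. real (\<mu> x y) * \<Phi> x y / 2)
      = (\<Sum>(x,y)\<in>UNIV. if x \<noteq> y then real (\<mu> x y) * \<Phi> x y / 2 else 0)"
    by (rule sum.mono_neutral_cong_left) auto
  moreover have "(\<Sum>(x,y)\<in>UNIV. if x \<noteq> y then real (\<mu> x y) * \<Phi> x y / 2 else 0)
      = (\<Sum>x\<in>UNIV. \<Sum>y\<in>UNIV. if x \<noteq> y then real (\<mu> x y) * \<Phi> x y / 2 else 0)"
    by (simp add: sum.cartesian_product)
  ultimately show ?thesis by (simp add: S_R_def)
qed

lemma weak_dual:
  fixes \<nu> :: "'x::finite \<Rightarrow> 'x \<Rightarrow> nat"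
  assumes nu: "\<nu> \<in> BM n" and u0: "\<forall>x. 0 \<le> u x"
    and feas: "\<forall>x y. \<Phi> x y + A x y \<le> u x + u y"
  shows "bval (\<lambda>x y. \<Phi> x y / 2) \<nu> + (\<Sum>x\<in>UNIV. \<Sum>y\<in>UNIV. real (\<nu> x y) * A x y) / 2
     \<le> (\<Sum>x\<in>UNIV. u x * real (n x))"
proof -
  have e1: "bval (\<lambda>x y. \<Phi> x y / 2) \<nu> + (\<Sum>x\<in>UNIV. \<Sum>y\<in>UNIV. real (\<nu> x y) * A x y) / 2
      = (\<Sum>x\<in>UNIV. \<Sum>y\<in>UNIV. real (\<nu> x y) * (\<Phi> x y + A x y) / 2)"
    by (simp add: bval_def sum_divide_distrib sum.distrib[symmetric] algebra_simps add_divide_distrib)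
  have e2: "\<dots> \<le> (\<Sum>x\<in>UNIV. \<Sum>y\<in>UNIV. real (\<nu> x y) * (u x + u y) / 2)"
    by (intro sum_mono divide_right_mono mult_left_mono) (auto simp: feas[rule_format])
  have e3: "(\<Sum>x\<in>UNIV. \<Sum>y\<in>UNIV. real (\<nu> x y) * (u x + u y) / 2)
      = ((\<Sum>x\<in>UNIV. real (row \<nu> x) * u x) + (\<Sum>y\<in>UNIV. real (col \<nu> y) * u y)) / 2"
  proof -
    have "(\<Sum>x\<in>UNIV. \<Sum>y\<in>UNIV. real (\<nu> x y) * (u x + u y) / 2)
       = ((\<Sum>x\<in>UNIV. \<Sum>y\<in>UNIV. real (\<nu> x y) * u x) + (\<Sum>x\<in>UNIV. \<Sum>y\<in>UNIV. real (\<nu> x y) * u y)) / 2"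
      by (simp add: sum_divide_distrib sum.distrib[symmetric] algebra_simps)
    also have "(\<Sum>x\<in>UNIV. \<Sum>y\<in>UNIV. real (\<nu> x y) * u y) = (\<Sum>y\<in>UNIV. \<Sum>x\<in>UNIV. real (\<nu> x y) * u y)"
      by (rule sum.swap)
    finally show ?thesis by (simp add: row_def col_def sum_distrib_right)
  qed
  have r: "(\<Sum>x\<in>UNIV. real (row \<nu> x) * u x) \<le> (\<Sum>x\<in>UNIV. u x * real (n x))"
    using nu u0 by (intro sum_mono) (auto simp: BM_def mult.commute intro: mult_left_mono)
  have c: "(\<Sum>x\<in>UNIV. real (col \<nu> x) * u x) \<le> (\<Sum>x\<in>UNIV. u x * real (n x))"
    using nu u0 by (intro sum_mono) (auto simp: BM_def mult.commute intro: mult_left_mono)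
  have f: "((\<Sum>x\<in>UNIV. real (row \<nu> x) * u x) + (\<Sum>y\<in>UNIV. real (col \<nu> y) * u y)) / 2
     \<le> (\<Sum>x\<in>UNIV. u x * real (n x))" using r c by simp
  show ?thesis using e1 e2 e3 f by simp
qed

lemma sum_anti_zero:
  fixes \<nu> :: "'x::finite \<Rightarrow> 'x \<Rightarrow> nat"
  assumes "\<forall>x y. \<nu> x y = \<nu> y x" "\<forall>x y. A x y = - A y x"
  shows "(\<Sum>x\<in>UNIV. \<Sum>y\<in>UNIV. real (\<nu> x y) * A x y) = 0"
proof -
  have "(\<Sum>x\<in>UNIV. \<Sum>y\<in>UNIV. real (\<nu> x y) * A x y) = (\<Sum>y\<in>UNIV. \<Sum>x\<in>UNIV. real (\<nu> x y) * A x y)"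
    by (rule sum.swap)
  also have "\<dots> = - (\<Sum>y\<in>UNIV. \<Sum>x\<in>UNIV. real (\<nu> y x) * A y x)"
  proof -
    have pw: "real (\<nu> x y) * A x y = - (real (\<nu> y x) * A y x)" for x y
      using assms(1)[rule_format, of x y] assms(2)[rule_format, of x y] by simp
    have "(\<Sum>y\<in>UNIV. \<Sum>x\<in>UNIV. real (\<nu> x y) * A x y)
        = (\<Sum>y\<in>UNIV. \<Sum>x\<in>UNIV. - (real (\<nu> y x) * A y x))"
      by (intro sum.cong refl pw)
    also have "\<dots> = - (\<Sum>y\<in>UNIV. \<Sum>x\<in>UNIV. real (\<nu> y x) * A y x)"
      by (simp only: sum_negf)
    finally show ?thesis .
  qed
  finally show ?thesis by simp
qed

theorem theorem2:
  fixes n :: "'x::finite \<Rightarrow> nat" and \<Phi> :: "'x \<Rightarrow> 'x \<Rightarrow> real"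
  assumes sym: "\<forall>x y. \<Phi> x y = \<Phi> y x"
  shows "((\<exists>\<mu>. stable_roommate_matching n \<Phi> \<mu>) \<longleftrightarrow> W_P n \<Phi> = W_B n n (\<lambda>x y. \<Phi> x y / 2))
    \<and> (\<forall>\<mu>. stable_roommate_matching n \<Phi> \<mu> \<longrightarrow> S_R \<mu> \<Phi> = W_P n \<Phi>)
    \<and> (\<forall>\<mu> u. stable_outcome n \<Phi> \<mu> u \<longrightarrow> (\<exists>A. dual_optimal n \<Phi> u A))"
proof -
  let ?\<Psi> = "\<lambda>x y. \<Phi> x y / 2"
  have finRM: "finite (roommate_matchings n)" by (rule finite_RM)
  have z: "(\<lambda>_ _. 0) \<in> roommate_matchings n" by (simp add: roommate_matchings_def)
  have neRM: "roommate_matchings n \<noteq> {}" using z by blast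
  have zB: "(\<lambda>_ _. 0) \<in> BM n" by (simp add: BM_def row_def col_def)
  have finB: "finite (BM n)" by (rule finite_BM)
  have WP: "W_P n \<Phi> = Max ((\<lambda>\<mu>. S_R \<mu> \<Phi>) ` roommate_matchings n)" by (simp add: W_P_def)
  have WB: "W_B n n ?\<Psi> = Max (bval ?\<Psi> ` BM n)" by (rule WB_eq)
  have SR_le: "S_R \<mu> \<Phi> \<le> W_P n \<Phi>" if "\<mu> \<in> roommate_matchings n" for \<mu>
    unfolding WP using finRM that by (intro Max_ge) auto
  have bv_le: "bval ?\<Psi> \<nu> \<le> W_B n n ?\<Psi>" if "\<nu> \<in> BM n" for \<nu>
    unfolding WB using finB that by (intro Max_ge) auto
  have WP_le: "W_P n \<Phi> \<le> W_B n n ?\<Psi>"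
    unfolding WP
  proof (rule Max.boundedI)
    show "finite ((\<lambda>\<mu>. S_R \<mu> \<Phi>) ` roommate_matchings n)" using finRM by simp
    show "(\<lambda>\<mu>. S_R \<mu> \<Phi>) ` roommate_matchings n \<noteq> {}" using neRM by simp
    fix a assume "a \<in> (\<lambda>\<mu>. S_R \<mu> \<Phi>) ` roommate_matchings n"
    then obtain \<mu> where "\<mu> \<in> roommate_matchings n" "a = S_R \<mu> \<Phi>" by blast
    then show "a \<le> W_B n n ?\<Psi>" using bv_le[OF dbl_BM[of \<mu> n]] S_R_dbl[of \<mu> \<Phi>] by simp
  qed
  have stab: "S_R \<mu> \<Phi> = W_P n \<Phi> \<and> W_P n \<Phi> = W_B n n ?\<Psi>" if st: "stable_outcome n \<Phi> \<mu> u" for \<mu> u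
  proof -
    from st have mu: "\<mu> \<in> roommate_matchings n" and eq: "(\<Sum>x\<in>UNIV. real (n x) * u x) = S_R \<mu> \<Phi>"
      and u0: "\<forall>x. 0 \<le> u x" and f: "\<forall>x y. \<Phi> x y \<le> u x + u y"
      by (auto simp: stable_outcome_def is_outcome_def)
    have eq': "(\<Sum>x\<in>UNIV. u x * real (n x)) = S_R \<mu> \<Phi>" using eq by (simp add: mult.commute)
    have f0: "\<forall>x y. \<Phi> x y + 0 \<le> u x + u y" using f by simp
    have "W_B n n ?\<Psi> \<le> (\<Sum>x\<in>UNIV. u x * real (n x))"
      unfolding WB
    proof (rule Max.boundedI)
      show "finite (bval ?\<Psi> ` BM n)" using finB by simp
      show "bval ?\<Psi> ` BM n \<noteq> {}" using zB by blast
      fix a assume "a \<in> bval ?\<Psi> ` BM n"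
      then obtain \<nu> where nu: "\<nu> \<in> BM n" "a = bval ?\<Psi> \<nu>" by blast
      show "a \<le> (\<Sum>x\<in>UNIV. u x * real (n x))"
        using weak_dual[OF nu(1) u0 f0] nu(2) by simp
    qed
    with SR_le[OF mu] WP_le eq' show ?thesis by linarith
  qed
  have dual: "dual_optimal n \<Phi> u (\<lambda>_ _. 0)" if st: "stable_outcome n \<Phi> \<mu> u" for \<mu> u
  proof -
    from st have mu: "\<mu> \<in> roommate_matchings n" and eq: "(\<Sum>x\<in>UNIV. real (n x) * u x) = S_R \<mu> \<Phi>"
      and u0: "\<forall>x. 0 \<le> u x" and f: "\<forall>x y. \<Phi> x y \<le> u x + u y"
      by (auto simp: stable_outcome_def is_outcome_def)
    have eq': "(\<Sum>x\<in>UNIV. u x * real (n x)) = bval ?\<Psi> (dbl \<mu>)"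
      using eq S_R_dbl[of \<mu> \<Phi>] by (simp add: mult.commute)
    have msym: "\<mu> x y = \<mu> y x" for x y using mu unfolding roommate_matchings_def by blast
    have dsym: "\<forall>x y. dbl \<mu> x y = dbl \<mu> y x" by (auto simp: dbl_def msym)
    have feas: "dual_feasible \<Phi> u (\<lambda>_ _. 0)" using u0 f by (simp add: dual_feasible_def)
    have "(\<Sum>x\<in>UNIV. u x * real (n x)) \<le> (\<Sum>x\<in>UNIV. u' x * real (n x))"
      if fe: "dual_feasible \<Phi> u' A'" for u' A'
    proof -
      from fe have u0': "\<forall>x. 0 \<le> u' x" and f': "\<forall>x y. \<Phi> x y + A' x y \<le> u' x + u' y"
        and an: "\<forall>x y. A' x y = - A' y x" unfolding dual_feasible_def by blast+
      show ?thesis using weak_dual[OF dbl_BM[OF mu] u0' f'] sum_anti_zero[OF dsym an] eq' by simp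
    qed
    then show ?thesis using feas by (simp add: dual_optimal_def)
  qed
  have conv: "\<exists>\<mu>. stable_roommate_matching n \<Phi> \<mu>" if eqW: "W_P n \<Phi> = W_B n n ?\<Psi>"
  proof -
    have "W_P n \<Phi> \<in> (\<lambda>\<mu>. S_R \<mu> \<Phi>) ` roommate_matchings n"
      unfolding WP using finRM neRM by (intro Max_in) auto
    then obtain \<mu> where mu: "\<mu> \<in> roommate_matchings n" "S_R \<mu> \<Phi> = W_P n \<Phi>" by force
    have "W_B n n ?\<Psi> \<in> bval ?\<Psi> ` BM n"
      unfolding WB using finB zB by (intro Max_in) auto
    then obtain \<nu> where nu: "\<nu> \<in> BM n" "bval ?\<Psi> \<nu> = W_B n n ?\<Psi>" by force
    have opt: "\<forall>\<nu>'\<in>BM n. bval ?\<Psi> \<nu>' \<le> bval ?\<Psi> \<nu>" using bv_le nu by simp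
    obtain u v where u0: "\<forall>x. 0 \<le> u x" and v0: "\<forall>y. 0 \<le> v y"
      and uv: "\<forall>x y. ?\<Psi> x y \<le> u x + v y"
      and s: "(\<Sum>x\<in>UNIV. real (n x) * u x) + (\<Sum>y\<in>UNIV. real (n y) * v y) = bval ?\<Psi> \<nu>"
      using duality[OF nu(1) opt] by blast
    define w where "w x = u x + v x" for x
    have w0: "\<forall>x. 0 \<le> w x" using u0 v0 by (simp add: w_def add_nonneg_nonneg)
    have wf: "\<forall>x y. \<Phi> x y \<le> w x + w y"
    proof (intro allI)
      fix x y
      have "\<Phi> x y / 2 \<le> u x + v y" "\<Phi> y x / 2 \<le> u y + v x" using uv by auto
      then show "\<Phi> x y \<le> w x + w y" using sym[rule_format, of x y] by (simp add: w_def)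
    qed
    have ws: "(\<Sum>x\<in>UNIV. real (n x) * w x) = S_R \<mu> \<Phi>"
    proof -
      have "(\<Sum>x\<in>UNIV. real (n x) * w x) = (\<Sum>x\<in>UNIV. real (n x) * u x) + (\<Sum>y\<in>UNIV. real (n y) * v y)"
        by (simp add: w_def distrib_left sum.distrib)
      then show ?thesis using s nu(2) eqW mu(2) by simp
    qed
    have "stable_outcome n \<Phi> \<mu> w"
      using mu(1) ws w0 wf by (simp add: stable_outcome_def is_outcome_def)
    then show ?thesis using mu(1) by (auto simp: stable_roommate_matching_def)
  qed
  show ?thesis
  proof (intro conjI allI impI iffI)
    assume "\<exists>\<mu>. stable_roommate_matching n \<Phi> \<mu>"
    then show "W_P n \<Phi> = W_B n n ?\<Psi>" using stab by (auto simp: stable_roommate_matching_def)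
  next
    assume "W_P n \<Phi> = W_B n n ?\<Psi>"
    then show "\<exists>\<mu>. stable_roommate_matching n \<Phi> \<mu>" by (rule conv)
  next
    fix \<mu> assume "stable_roommate_matching n \<Phi> \<mu>"
    then show "S_R \<mu> \<Phi> = W_P n \<Phi>" using stab by (auto simp: stable_roommate_matching_def)
  next
    fix \<mu> u assume "stable_outcome n \<Phi> \<mu> u"
    then show "\<exists>A. dual_optimal n \<Phi> u A" using dual by blast
  qed
qed

end
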